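(* Let $A\in\mathbb{C}^{m\times n}$ and let $A^{(1)}\in\mathbb{C}^{n\times m}$ satisfy $AA^{(1)}A=A$. Then the following are equivalent: (1) $A^{\mathfrak{m}}$ exists; (2) $A^{\sim}A+I_n-A^{(1)}A$ is nonsingular; (3) $AA^{\sim}+I_m-AA^{(1)}$ is nonsingular. In this case, $$A^{\mathfrak{m}}=\left(A(A^{\sim}A+I_n-A^{(1)}A)^{-1}\right)^{\sim}=\left((AA^{\sim}+I_m-AA^{(1)})^{-1}A\right)^{\sim}.$$
   Context: For a positive integer $k$, the Minkowski metric matrix of order $k$ is $G_k=\mathrm{diag}(1,-I_{k-1})$ (with $G_1=(1)$). For $M\in\mathbb{C}^{p\times q}$, the Minkowski adjoint is $M^{\sim}=G_qM^*G_p$, where $M^*$ is the conjugate transpose. The Minkowski inverse of $A\in\mathbb{C}^{m\times n}$, denoted $A^{\mathfrak{m}}$, is a matrix $X\in\mathbb{C}^{n\times m}$ with $AXA=A$, $XAX=X$, $(AX)^{\sim}=AX$, $(XA)^{\sim}=XA$ (unique if it exists). *)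

theory Defs
  imports "Jordan_Normal_Form.Gauss_Jordan_Elimination"
begin

definition minkowski_G :: "nat \<Rightarrow> complex mat" where
  "minkowski_G k = mat k k (\<lambda>(i,j). if i = j then (if i = 0 then 1 else -1) else 0)"

definition conj_trans :: "complex mat \<Rightarrow> complex mat" where
  "conj_trans M = mat (dim_col M) (dim_row M) (\<lambda>(i,j). cnj (M $$ (j,i)))"

definition mink_adj :: "complex mat \<Rightarrow> complex mat" where
  "mink_adj M = minkowski_G (dim_col M) * conj_trans M * minkowski_G (dim_row M)"

definition is_mink_inverse :: "complex mat \<Rightarrow> complex mat \<Rightarrow> bool" where
  "is_mink_inverse A X \<longleftrightarrow> X \<in> carrier_mat (dim_col A) (dim_row A) \<and>
     A * X * A = A \<and> X * A * X = X \<and>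
     mink_adj (A * X) = A * X \<and> mink_adj (X * A) = X * A"

end

theory Submission
  imports Defs "Jordan_Normal_Form.Determinant"
begin


lemma massoc: "dim_col A = dim_row B \<Longrightarrow> dim_col B = dim_row C \<Longrightarrow> A * B * C = A * (B * (C :: 'a :: semiring_0 mat))"
  by (rule assoc_mult_mat[of A "dim_row A" "dim_col A" B "dim_col B" C "dim_col C"]) auto

lemma mdistl: "dim_col A = dim_row B \<Longrightarrow> dim_row B = dim_row C \<Longrightarrow> dim_col B = dim_col C \<Longrightarrow>
   A * (B + C) = A * B + A * (C :: 'a :: semiring_0 mat)"
  by (rule mult_add_distrib_mat[of A "dim_row A" "dim_col A" B "dim_col B"]) auto

lemma mdistr: "dim_col A = dim_row C \<Longrightarrow> dim_row A = dim_row B \<Longrightarrow> dim_col A = dim_col B \<Longrightarrow>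
   (A + B) * C = A * C + B * (C :: 'a :: semiring_0 mat)"
  by (rule add_mult_distrib_mat[of A "dim_row A" "dim_col A" B C "dim_col C"]) auto

lemma mdistl_minus: "dim_col A = dim_row B \<Longrightarrow> dim_row B = dim_row C \<Longrightarrow> dim_col B = dim_col C \<Longrightarrow>
   A * (B - C) = A * B - A * (C :: 'a :: ring mat)"
  by (rule mult_minus_distrib_mat[of A "dim_row A" "dim_col A" B "dim_col B"]) auto

lemma mdistr_minus: "dim_col A = dim_row C \<Longrightarrow> dim_row A = dim_row B \<Longrightarrow> dim_col A = dim_col B \<Longrightarrow>
   (A - B) * C = A * C - B * (C :: 'a :: ring mat)"
  by (rule minus_mult_distrib_mat[of A "dim_row A" "dim_col A" B C "dim_col C"]) auto

lemma G_carrier[simp]: "dim_row (minkowski_G k) = k" "dim_col (minkowski_G k) = k"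
  unfolding minkowski_G_def by auto

lemma G_sq: "minkowski_G k * minkowski_G k = 1\<^sub>m k"
proof (rule eq_matI)
  fix i j assume ij: "i < dim_row (1\<^sub>m k)" "j < dim_col (1\<^sub>m k)"
  hence "(minkowski_G k * minkowski_G k) $$ (i,j) =
     (\<Sum>l\<in>{0..<k}. (if i = l then (if i = 0 then 1 else -1) else 0) * minkowski_G k $$ (l, j))"
    by (auto simp: minkowski_G_def scalar_prod_def intro!: sum.cong)
  also have "\<dots> = (\<Sum>l\<in>{0..<k}. if l = i then (if i = 0 then 1 else -1) * minkowski_G k $$ (i, j) else 0)"
    by (rule sum.cong) auto
  also have "\<dots> = (if i = 0 then 1 else -1) * minkowski_G k $$ (i, j)"
    using ij by simp
  also have "\<dots> = 1\<^sub>m k $$ (i,j)" using ij by (auto simp: minkowski_G_def)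
  finally show "(minkowski_G k * minkowski_G k) $$ (i,j) = 1\<^sub>m k $$ (i,j)" .
qed auto

lemma ct_dim[simp]: "dim_row (conj_trans M) = dim_col M" "dim_col (conj_trans M) = dim_row M"
  unfolding conj_trans_def by auto

lemma ct_ct[simp]: "conj_trans (conj_trans M) = M"
  by (rule eq_matI) (auto simp: conj_trans_def)

lemma ct_G[simp]: "conj_trans (minkowski_G k) = minkowski_G k"
  by (rule eq_matI) (auto simp: conj_trans_def minkowski_G_def)

lemma ct_one[simp]: "conj_trans (1\<^sub>m k) = 1\<^sub>m k"
  by (rule eq_matI) (auto simp: conj_trans_def)

lemma ct_mult: "dim_col A = dim_row B \<Longrightarrow> conj_trans (A * B) = conj_trans B * conj_trans A"
  by (rule eq_matI) (auto simp: conj_trans_def scalar_prod_def mult.commute)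

lemma ct_add: "dim_row A = dim_row B \<Longrightarrow> dim_col A = dim_col B \<Longrightarrow> conj_trans (A + B) = conj_trans A + conj_trans B"
  by (rule eq_matI) (auto simp: conj_trans_def)

lemma ct_minus: "dim_row A = dim_row B \<Longrightarrow> dim_col A = dim_col B \<Longrightarrow> conj_trans (A - B) = conj_trans A - conj_trans B"
  by (rule eq_matI) (auto simp: conj_trans_def)

lemma ma_dim[simp]: "dim_row (mink_adj M) = dim_col M" "dim_col (mink_adj M) = dim_row M"
  unfolding mink_adj_def by auto

lemma ma_ma[simp]: "mink_adj (mink_adj M) = M"
proof -
  let ?G = minkowski_G let ?p = "dim_row M" let ?q = "dim_col M"
  have "mink_adj (mink_adj M) = ?G ?p * conj_trans (?G ?q * conj_trans M * ?G ?p) * ?G ?q"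
    by (simp add: mink_adj_def)
  also have "conj_trans (?G ?q * conj_trans M * ?G ?p) = ?G ?p * M * ?G ?q"
    by (simp add: ct_mult massoc)
  also have "?G ?p * (?G ?p * M * ?G ?q) * ?G ?q = (?G ?p * ?G ?p) * M * (?G ?q * ?G ?q)"
    by (simp add: massoc)
  finally show ?thesis by (simp add: G_sq)
qed

lemma ma_mult: "dim_col A = dim_row B \<Longrightarrow> mink_adj (A * B) = mink_adj B * mink_adj A"
proof -
  assume d: "dim_col A = dim_row B"
  let ?G = minkowski_G
  have "mink_adj B * mink_adj A = ?G (dim_col B) * conj_trans B * (?G (dim_row B) * ?G (dim_row B)) * conj_trans A * ?G (dim_row A)"
    using d by (simp add: mink_adj_def massoc)
  also have "\<dots> = mink_adj (A * B)" using d by (simp add: G_sq mink_adj_def ct_mult massoc)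
  finally show ?thesis by simp
qed

lemma ma_add: "dim_row A = dim_row B \<Longrightarrow> dim_col A = dim_col B \<Longrightarrow> mink_adj (A + B) = mink_adj A + mink_adj B"
  by (simp add: mink_adj_def ct_add mdistl mdistr)

lemma ma_minus: "dim_row A = dim_row B \<Longrightarrow> dim_col A = dim_col B \<Longrightarrow> mink_adj (A - B) = mink_adj A - mink_adj B"
  by (simp add: mink_adj_def ct_minus mdistl_minus mdistr_minus)

lemma ma_one[simp]: "mink_adj (1\<^sub>m k) = 1\<^sub>m k"
  by (simp add: mink_adj_def G_sq)



lemma ext_r: "P * Q = R \<Longrightarrow> dim_col Q = dim_row Y \<Longrightarrow> dim_col P = dim_row Q \<Longrightarrow> P * (Q * Y) = R * (Y :: 'a :: semiring_0 mat)"
  by (metis massoc)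

lemma mcancel: "dim_row P = dim_row Q \<Longrightarrow> dim_col P = dim_col Q \<Longrightarrow> P - P + Q = (Q :: 'a :: ring mat)"
  by (rule eq_matI) auto

lemma mcancel2: "dim_row P = dim_row Q \<Longrightarrow> dim_col P = dim_col Q \<Longrightarrow> Q - P + P = (Q :: 'a :: ring mat)"
  by (rule eq_matI) auto

lemma forward:
  fixes A A1 X :: "complex mat"
  assumes A: "A \<in> carrier_mat m n" and A1: "A1 \<in> carrier_mat n m" and g: "A * A1 * A = A"
    and mi: "is_mink_inverse A X"
  defines "C \<equiv> 1\<^sub>m n - X * A + A1 * (A * (X * mink_adj X))"
  defines "C' \<equiv> 1\<^sub>m m - A * X + mink_adj X * (X * (A * A1))"
  shows "(mink_adj A * A + 1\<^sub>m n - A1 * A) * C = 1\<^sub>m n"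
    and "C' * (A * mink_adj A + 1\<^sub>m m - A * A1) = 1\<^sub>m m"
    and "mink_adj (A * C) = X" and "mink_adj (C' * A) = X"
    and "C \<in> carrier_mat n n" and "C' \<in> carrier_mat m m"
proof -
  define Aa where "Aa = mink_adj A"
  define Xa where "Xa = mink_adj X"
  have X: "X \<in> carrier_mat n m" using mi A unfolding is_mink_inverse_def by auto
  have dA[simp]: "dim_row A = m" "dim_col A = n" using A by auto
  have dA1[simp]: "dim_row A1 = n" "dim_col A1 = m" using A1 by auto
  have dX[simp]: "dim_row X = n" "dim_col X = m" using X by auto
  have dAa[simp]: "dim_row Aa = n" "dim_col Aa = m" by (auto simp: Aa_def)
  have dXa[simp]: "dim_row Xa = m" "dim_col Xa = n" by (auto simp: Xa_def)
  have axa: "A * X * A = A" and xax: "X * A * X = X" and sax: "mink_adj (A * X) = A * X"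
    and sxa: "mink_adj (X * A) = X * A" using mi unfolding is_mink_inverse_def by auto
  have g': "A * (A1 * A) = A" using g by (simp add: massoc)
  have axa': "A * (X * A) = A" using axa by (simp add: massoc)
  have xax': "X * (A * X) = X" using xax by (simp add: massoc)
  have g'': "A * (A1 * (A * Y)) = A * Y" if "dim_row Y = n" for Y
    using that g' by (metis massoc dA dA1 index_mult_mat(2,3))
  have axa'': "A * (X * (A * Y)) = A * Y" if "dim_row Y = n" for Y
    using that axa' by (metis massoc dA dX index_mult_mat(2,3))
  have f1: "Aa * (A * X) = Aa"
  proof -
    have "Aa * (A * X) = mink_adj (A * X * A)" by (simp add: ma_mult sax Aa_def)
    thus ?thesis by (simp add: axa Aa_def)
  qed
  have f2: "X * (A * Aa) = Aa"
  proof -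
    have "X * (A * Aa) = mink_adj (A * (X * A))" by (simp add: ma_mult sxa Aa_def massoc)
    thus ?thesis by (simp add: axa' Aa_def)
  qed
  have f3: "Aa * (A * (X * Xa)) = X * A"
  proof -
    have "Aa * (A * (X * Xa)) = Aa * (A * X) * Xa" by (simp add: massoc)
    also have "\<dots> = Aa * Xa" by (simp add: f1)
    also have "\<dots> = mink_adj (X * A)" by (simp add: ma_mult Aa_def Xa_def)
    finally show ?thesis by (simp add: sxa)
  qed
  have f4: "Xa * (X * (A * Aa)) = A * X"
  proof -
    have "Xa * (X * (A * Aa)) = Xa * Aa" by (simp add: f2)
    also have "\<dots> = mink_adj (A * X)" by (simp add: ma_mult Aa_def Xa_def)
    finally show ?thesis by (simp add: sax)
  qed
  show "C \<in> carrier_mat n n" "C' \<in> carrier_mat m m" unfolding C_def C'_def by auto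
  show "(mink_adj A * A + 1\<^sub>m n - A1 * A) * C = 1\<^sub>m n"
  proof -
    have e1: "Aa * A * C = Aa * A - Aa * A + X * A"
      unfolding C_def Xa_def[symmetric] by (simp add: massoc mdistl mdistl_minus axa' g'' f3)
    have e2: "A1 * A * C = A1 * A - A1 * A + A1 * (A * (X * Xa))"
      unfolding C_def Xa_def[symmetric] by (simp add: massoc mdistl mdistl_minus axa' g'' axa'')
    have "(Aa * A + 1\<^sub>m n - A1 * A) * C = Aa * A * C + C - A1 * A * C"
      unfolding C_def by (simp add: mdistr mdistr_minus)
    also have "\<dots> = 1\<^sub>m n" unfolding e1 e2 unfolding C_def Xa_def[symmetric]
      by (rule eq_matI) auto
    finally show ?thesis by (simp add: Aa_def)
  qed
  show "C' * (A * mink_adj A + 1\<^sub>m m - A * A1) = 1\<^sub>m m"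
  proof -
    have e1: "C' * (A * Aa) = A * Aa - A * Aa + A * X"
      unfolding C'_def Xa_def[symmetric] by (simp add: mdistr mdistr_minus massoc axa'' f4 g'')
    have e2: "C' * (A * A1) = A * A1 - A * A1 + Xa * (X * (A * A1))"
      unfolding C'_def Xa_def[symmetric] by (simp add: mdistr mdistr_minus massoc axa'' g'')
    have "C' * (A * Aa + 1\<^sub>m m - A * A1) = C' * (A * Aa) + C' - C' * (A * A1)"
      unfolding C'_def by (simp add: mdistl mdistl_minus)
    also have "\<dots> = 1\<^sub>m m" unfolding e1 e2 unfolding C'_def Xa_def[symmetric]
      by (rule eq_matI) auto
    finally show ?thesis by (simp add: Aa_def)
  qed
  show "mink_adj (A * C) = X"
  proof -
    have "A * C = A * (X * Xa)"
      unfolding C_def Xa_def[symmetric] by (simp add: massoc mdistl mdistl_minus axa' g'' mcancel)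
    hence "mink_adj (A * C) = X * (mink_adj (A * X))"
      by (simp add: ma_mult Xa_def massoc)
    thus ?thesis by (simp add: sax xax')
  qed
  show "mink_adj (C' * A) = X"
  proof -
    have "C' * A = Xa * (X * A)"
      unfolding C'_def Xa_def[symmetric] by (simp add: massoc mdistr mdistr_minus axa' g'' g' mcancel)
    hence "mink_adj (C' * A) = mink_adj (X * A) * X"
      by (simp add: ma_mult Xa_def massoc)
    thus ?thesis by (simp add: sxa xax)
  qed
qed



lemma sub_eq: "P - Q = R - R \<Longrightarrow> P \<in> carrier_mat p q \<Longrightarrow> Q \<in> carrier_mat p q \<Longrightarrow> R \<in> carrier_mat p q \<Longrightarrow> P = (Q :: 'a :: ring mat)"
proof (rule eq_matI)
  fix i j assume h: "P - Q = R - R" "P \<in> carrier_mat p q" "Q \<in> carrier_mat p q" "R \<in> carrier_mat p q"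
    and ij: "i < dim_row Q" "j < dim_col Q"
  from arg_cong[OF h(1), of "\<lambda>Z. Z $$ (i,j)"] have "P $$ (i,j) - Q $$ (i,j) = R $$ (i,j) - R $$ (i,j)"
    using h(2-4) ij by simp
  thus "P $$ (i,j) = Q $$ (i,j)" by simp
qed auto

lemma lin1: "M + N - K = L \<Longrightarrow> N - K = L - R \<Longrightarrow> M \<in> carrier_mat p q \<Longrightarrow> N \<in> carrier_mat p q \<Longrightarrow> K \<in> carrier_mat p q \<Longrightarrow>
   L \<in> carrier_mat p q \<Longrightarrow> R \<in> carrier_mat p q \<Longrightarrow> M = (R :: 'a :: ring mat)"
proof (rule eq_matI)
  fix i j assume h: "M + N - K = L" "N - K = L - R" "M \<in> carrier_mat p q" "N \<in> carrier_mat p q" "K \<in> carrier_mat p q"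
   "L \<in> carrier_mat p q" "R \<in> carrier_mat p q" and ij: "i < dim_row R" "j < dim_col R"
  from arg_cong[OF h(1), of "\<lambda>Z. Z $$ (i,j)"] have 1: "M $$ (i,j) + N $$ (i,j) - K $$ (i,j) = L $$ (i,j)"
    using h(3-7) ij by simp
  from arg_cong[OF h(2), of "\<lambda>Z. Z $$ (i,j)"] have 2: "N $$ (i,j) - K $$ (i,j) = L $$ (i,j) - R $$ (i,j)"
    using h(3-7) ij by simp
  have 3: "M $$ (i,j) = L $$ (i,j) - (N $$ (i,j) - K $$ (i,j))" using 1 by (simp add: algebra_simps)
  have 4: "R $$ (i,j) = L $$ (i,j) - (N $$ (i,j) - K $$ (i,j))" using 2 by (simp add: algebra_simps)
  from 3 4 show "M $$ (i,j) = R $$ (i,j)" by simp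
qed auto

lemma addsub: "dim_row P = dim_row Q \<Longrightarrow> dim_col P = dim_col Q \<Longrightarrow> P + Q - Q = (P :: 'a :: ring mat)"
  by (rule eq_matI) auto

lemma subsub: "dim_row P = dim_row Q \<Longrightarrow> dim_col P = dim_col Q \<Longrightarrow> P - (Q - Q) = (P :: 'a :: ring mat)"
  by (rule eq_matI) auto

lemma backward:
  fixes A A1 C :: "complex mat"
  assumes A: "A \<in> carrier_mat m n" and A1: "A1 \<in> carrier_mat n m" and g: "A * A1 * A = A"
    and C: "C \<in> carrier_mat n n"
    and BC: "(mink_adj A * A + 1\<^sub>m n - A1 * A) * C = 1\<^sub>m n"
    and CB: "C * (mink_adj A * A + 1\<^sub>m n - A1 * A) = 1\<^sub>m n"
  shows "is_mink_inverse A (mink_adj C * mink_adj A)"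
proof -
  have dA[simp]: "dim_row A = m" "dim_col A = n" using A by auto
  have dA1[simp]: "dim_row A1 = n" "dim_col A1 = m" using A1 by auto
  have dC[simp]: "dim_row C = n" "dim_col C = n" using C by auto
  define B where "B = mink_adj A * A + 1\<^sub>m n - A1 * A"
  have dB[simp]: "dim_row B = n" "dim_col B = n" by (auto simp: B_def)
  have BC': "B * C = 1\<^sub>m n" and CB': "C * B = 1\<^sub>m n" using BC CB by (auto simp: B_def)
  have g': "A * (A1 * A) = A" using g by (simp add: massoc)
  have BP: "B * (1\<^sub>m n - A1 * A) = 1\<^sub>m n - A1 * A"
  proof -
    have e1: "mink_adj A * A * (1\<^sub>m n - A1 * A) = mink_adj A * A - mink_adj A * A"
      by (simp add: mdistl_minus massoc g')
    have e2: "A1 * A * (1\<^sub>m n - A1 * A) = A1 * A - A1 * A"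
      by (simp add: mdistl_minus massoc g')
    have "B * (1\<^sub>m n - A1 * A) =
       mink_adj A * A * (1\<^sub>m n - A1 * A) + 1\<^sub>m n * (1\<^sub>m n - A1 * A) - A1 * A * (1\<^sub>m n - A1 * A)"
      unfolding B_def by (rule trans[OF mdistr_minus]; simp add: mdistr)
    also have "\<dots> = 1\<^sub>m n - A1 * A" unfolding e1 e2 by (rule eq_matI) auto
    finally show ?thesis .
  qed
  have cp: "C * (1\<^sub>m n - A1 * A) = 1\<^sub>m n - A1 * A"
  proof -
    have "C * (1\<^sub>m n - A1 * A) = C * (B * (1\<^sub>m n - A1 * A))" by (simp add: BP)
    also have "\<dots> = (C * B) * (1\<^sub>m n - A1 * A)" by (rule massoc[symmetric]) simp_all
    finally show ?thesis by (simp add: CB')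
  qed
  have cp2: "C - C * (A1 * A) = 1\<^sub>m n - A1 * A"
    using cp by (simp add: mdistl_minus)
  have sd: "C * B = C * (mink_adj A * A) + C - C * (A1 * A)"
    unfolding B_def by (simp add: mdistl mdistl_minus)
  have b: "C * (mink_adj A * A) = A1 * A"
    by (rule lin1[OF sd[symmetric, unfolded CB'] cp2, of n n]) auto
  have c: "A * (C * (mink_adj A * A)) = A" by (simp add: b g')
  have c'': "A * (C * (mink_adj A * (A * Y))) = A * Y" if "dim_row Y = n" for Y
  proof -
    have "A * (C * (mink_adj A * (A * Y))) = A * (C * (mink_adj A * A)) * Y" using that by (simp add: massoc)
    thus ?thesis by (simp add: c)
  qed
  have AB: "A * B = A * (mink_adj A * A)"
  proof -
    have "A * B = A * (mink_adj A * A) + A - A * (A1 * A)"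
      unfolding B_def by (simp add: mdistl mdistl_minus)
    thus ?thesis by (simp add: g' addsub)
  qed
  have a: "A * (mink_adj A * (A * C)) = A"
  proof -
    have "A = A * (B * C)" by (simp add: BC')
    also have "\<dots> = (A * B) * C" by (rule massoc[symmetric]) simp_all
    finally show ?thesis by (simp add: AB massoc)
  qed
  have d: "mink_adj A * (A * (mink_adj C * mink_adj A)) = mink_adj A"
  proof -
    have "mink_adj (A * (C * (mink_adj A * A))) = mink_adj A" by (simp add: c)
    thus ?thesis by (simp add: ma_mult massoc)
  qed
  have e: "mink_adj A * (A * (C * mink_adj A)) = mink_adj A"
  proof -
    have "mink_adj A * (A * (C * mink_adj A)) = mink_adj A * (A * (C * (mink_adj A * (A * (mink_adj C * mink_adj A)))))"
      by (simp add: d)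
    also have "\<dots> = mink_adj A * (A * (mink_adj C * mink_adj A))" by (simp add: c'')
    finally show ?thesis by (simp add: d)
  qed
  let ?Aa = "mink_adj A" let ?Ca = "mink_adj C"
  have AXA: "A * (?Ca * (?Aa * A)) = A"
  proof -
    have "mink_adj (A * (?Ca * (?Aa * A))) = ?Aa" by (simp add: ma_mult massoc e)
    hence "mink_adj (mink_adj (A * (?Ca * (?Aa * A)))) = mink_adj ?Aa" by simp
    thus ?thesis by simp
  qed
  have XAX: "?Ca * (?Aa * (A * (?Ca * ?Aa))) = ?Ca * ?Aa" by (simp add: d)
  have AXs: "mink_adj (A * (?Ca * ?Aa)) = A * (?Ca * ?Aa)"
  proof -
    have "mink_adj (A * (?Ca * ?Aa)) = A * (C * ?Aa)" by (simp add: ma_mult massoc)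
    also have "\<dots> = A * (C * (?Aa * (A * (?Ca * ?Aa))))" by (simp add: d)
    also have "\<dots> = A * (?Ca * ?Aa)" by (simp add: c'')
    finally show ?thesis .
  qed
  have hAt: "?Ca * (?Aa * (A * ?Aa)) = ?Aa"
  proof -
    have "mink_adj (A * (?Aa * (A * C))) = ?Aa" by (simp add: a)
    thus ?thesis by (simp add: ma_mult massoc)
  qed
  have hAt'': "?Ca * (?Aa * (A * (?Aa * Y))) = ?Aa * Y" if "dim_row Y = m" for Y
  proof -
    have "?Ca * (?Aa * (A * (?Aa * Y))) = ?Ca * (?Aa * (A * ?Aa)) * Y" using that by (simp add: massoc)
    thus ?thesis by (simp add: hAt)
  qed
  have acp: "A * C = A * (C * (A1 * A))"
  proof (rule sub_eq[of _ _ A m n])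
    have "A * (C - C * (A1 * A)) = A * (1\<^sub>m n - A1 * A)" by (simp add: cp2)
    thus "A * C - A * (C * (A1 * A)) = A - A" by (simp add: mdistl_minus g')
  qed auto
  have acp'': "A * (C * Y) = A * (C * (A1 * (A * Y)))" if "dim_row Y = n" for Y
  proof -
    have "A * (C * Y) = A * C * Y" using that by (simp add: massoc)
    also have "\<dots> = A * (C * (A1 * A)) * Y" by (simp add: acp)
    finally show ?thesis using that by (simp add: massoc)
  qed
  have a2: "A * (C * (A1 * (A * (?Aa * A)))) = A"
    using c acp''[of "?Aa * A"] by simp
  define W where "W = mink_adj A1 * (?Ca * ?Aa)"
  have dW[simp]: "dim_row W = m" "dim_col W = m" by (auto simp: W_def)
  have a3: "?Aa * (A * (?Aa * W)) = ?Aa"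
  proof -
    have "mink_adj (A * (C * (A1 * (A * (?Aa * A))))) = ?Aa" by (simp add: a2)
    thus ?thesis by (simp add: ma_mult massoc W_def)
  qed
  have XW: "?Ca * ?Aa = ?Aa * W"
  proof -
    have "?Ca * ?Aa = ?Ca * (?Aa * (A * (?Aa * W)))" by (simp add: a3)
    also have "\<dots> = ?Aa * W" by (simp add: hAt'')
    finally show ?thesis .
  qed
  have XW'': "?Ca * (?Aa * Y) = ?Aa * (W * Y)" if "dim_row Y = m" for Y
  proof -
    have "?Ca * (?Aa * Y) = ?Ca * ?Aa * Y" using that by (simp add: massoc)
    also have "\<dots> = ?Aa * W * Y" by (simp add: XW)
    finally show ?thesis using that by (simp add: massoc)
  qed
  have e'': "?Aa * (A * (C * (?Aa * Y))) = ?Aa * Y" if "dim_row Y = m" for Y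
  proof -
    have "?Aa * (A * (C * (?Aa * Y))) = ?Aa * (A * (C * ?Aa)) * Y" using that by (simp add: massoc)
    thus ?thesis by (simp add: e)
  qed
  define E2 where "E2 = ?Ca * (?Aa * A)"
  have dE2[simp]: "dim_row E2 = n" "dim_col E2 = n" by (auto simp: E2_def)
  have E1E2: "?Aa * (A * (C * E2)) = E2"
  proof -
    have "?Aa * (A * (C * E2)) = ?Aa * (A * (C * (?Aa * (W * A))))" by (simp add: E2_def XW'')
    also have "\<dots> = ?Aa * (W * A)" by (simp add: e'')
    finally show ?thesis by (simp add: E2_def XW'')
  qed
  have AQ: "A * (1\<^sub>m n - E2) = A - A" by (simp add: mdistl_minus E2_def AXA)
  have PQ: "(1\<^sub>m n - A1 * A) * (1\<^sub>m n - E2) = 1\<^sub>m n - E2"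
  proof -
    have "(1\<^sub>m n - A1 * A) * (1\<^sub>m n - E2) = (1\<^sub>m n - E2) - A1 * (A * (1\<^sub>m n - E2))"
      by (simp add: mdistr_minus massoc)
    also have "\<dots> = (1\<^sub>m n - E2) - (A1 * A - A1 * A)" by (simp add: AQ mdistl_minus)
    finally show ?thesis by (simp add: subsub)
  qed
  have CQ: "C * (1\<^sub>m n - E2) = 1\<^sub>m n - E2"
  proof -
    have "C * (1\<^sub>m n - E2) = C * ((1\<^sub>m n - A1 * A) * (1\<^sub>m n - E2))" by (simp add: PQ)
    also have "\<dots> = C * (1\<^sub>m n - A1 * A) * (1\<^sub>m n - E2)" by (rule massoc[symmetric]) simp_all
    finally show ?thesis by (simp add: cp PQ)
  qed
  have ACE: "A * C = A * (C * E2)"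
  proof (rule sub_eq[of _ _ A m n])
    have "A * (C * (1\<^sub>m n - E2)) = A - A" by (simp add: CQ AQ)
    thus "A * C - A * (C * E2) = A - A" by (simp add: mdistl_minus)
  qed auto
  have XAs: "mink_adj E2 = E2"
  proof -
    have "mink_adj E2 = ?Aa * (A * C)" by (simp add: E2_def ma_mult massoc)
    also have "\<dots> = E2" by (simp add: ACE E1E2)
    finally show ?thesis .
  qed
  show ?thesis unfolding is_mink_inverse_def
  proof (intro conjI)
    show "?Ca * ?Aa \<in> carrier_mat (dim_col A) (dim_row A)" by (rule carrier_matI) simp_all
    show "A * (?Ca * ?Aa) * A = A" using AXA by (simp add: massoc)
    show "?Ca * ?Aa * A * (?Ca * ?Aa) = ?Ca * ?Aa" using XAX by (simp add: massoc)
    show "mink_adj (A * (?Ca * ?Aa)) = A * (?Ca * ?Aa)" by (rule AXs)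
    show "mink_adj (?Ca * ?Aa * A) = ?Ca * ?Aa * A" using XAs by (simp add: E2_def massoc)
  qed
qed

lemma inv_char: assumes M: "M \<in> carrier_mat k k"
  shows "invertible_mat M \<longleftrightarrow> (\<exists>C \<in> carrier_mat k k. M * C = 1\<^sub>m k \<and> C * M = 1\<^sub>m k)"
proof
  assume "invertible_mat M"
  then obtain B where 1: "M * B = 1\<^sub>m (dim_row M)" and 2: "B * M = 1\<^sub>m (dim_row B)"
    unfolding invertible_mat_def inverts_mat_def by auto
  have "dim_col B = k" using arg_cong[OF 1, of dim_col] M by auto
  moreover have "dim_row B = k" using arg_cong[OF 2, of dim_col] M by auto
  ultimately show "\<exists>C \<in> carrier_mat k k. M * C = 1\<^sub>m k \<and> C * M = 1\<^sub>m k" using 1 2 M by auto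
next
  assume "\<exists>C \<in> carrier_mat k k. M * C = 1\<^sub>m k \<and> C * M = 1\<^sub>m k"
  then obtain C where "C \<in> carrier_mat k k" "M * C = 1\<^sub>m k" "C * M = 1\<^sub>m k" by auto
  thus "invertible_mat M" using M unfolding invertible_mat_def inverts_mat_def square_mat.simps by auto
qed

lemma inv_the: assumes M: "M \<in> carrier_mat k k" and C: "C \<in> carrier_mat k k"
  and MC: "M * C = 1\<^sub>m k" and CM: "C * M = (1\<^sub>m k :: complex mat)"
  shows "the (mat_inverse M) = C"
proof -
  have "det M * det C = 1" using det_mult[OF M C] MC by simp
  hence "det M \<noteq> 0" by auto
  from det_non_zero_imp_unit[OF M this] have "M \<in> Units (ring_mat TYPE(complex) k undefined)" .
  hence "mat_inverse M \<noteq> None" using mat_inverse(1)[OF M, of undefined] by auto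
  then obtain B where B: "mat_inverse M = Some B" by auto
  from mat_inverse(2)[OF M B] have BM: "B * M = 1\<^sub>m k" and Bc: "B \<in> carrier_mat k k" by auto
  have "B = B * (M * C)" using Bc by (simp add: MC)
  also have "\<dots> = (B * M) * C" using Bc M C by (simp add: assoc_mult_mat)
  finally show ?thesis using B C BM by simp
qed

lemma mi_adj: assumes "is_mink_inverse (mink_adj A) Y"
  shows "is_mink_inverse A (mink_adj Y)"
proof -
  have Y: "Y \<in> carrier_mat (dim_row A) (dim_col A)" and 1: "mink_adj A * Y * mink_adj A = mink_adj A"
    and 2: "Y * mink_adj A * Y = Y" and 3: "mink_adj (mink_adj A * Y) = mink_adj A * Y"
    and 4: "mink_adj (Y * mink_adj A) = Y * mink_adj A"
    using assms unfolding is_mink_inverse_def by auto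
  have dY[simp]: "dim_row Y = dim_row A" "dim_col Y = dim_col A" using Y by auto
  show ?thesis unfolding is_mink_inverse_def
  proof (intro conjI)
    show "mink_adj Y \<in> carrier_mat (dim_col A) (dim_row A)" by (rule carrier_matI) simp_all
    have "mink_adj (mink_adj A * Y * mink_adj A) = mink_adj (mink_adj A)" by (simp only: 1)
    thus "A * mink_adj Y * A = A" by (simp add: ma_mult massoc)
    have "mink_adj (Y * mink_adj A * Y) = mink_adj Y" by (simp only: 2)
    thus "mink_adj Y * A * mink_adj Y = mink_adj Y" by (simp add: ma_mult massoc)
    have e: "A * mink_adj Y = mink_adj (Y * mink_adj A)" by (simp add: ma_mult)
    show "mink_adj (A * mink_adj Y) = A * mink_adj Y" unfolding e 4 by (simp add: ma_mult)
    have e': "mink_adj Y * A = mink_adj (mink_adj A * Y)" by (simp add: ma_mult)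
    show "mink_adj (mink_adj Y * A) = mink_adj Y * A" unfolding e' 3 by (simp add: ma_mult)
  qed
qed

theorem theorem6p3:
  fixes A A1 :: "complex mat" and m n :: nat
  assumes "A \<in> carrier_mat m n"
    and "A1 \<in> carrier_mat n m"
    and "A * A1 * A = A"
  shows "((\<exists>X. is_mink_inverse A X) \<longleftrightarrow>
            invertible_mat (mink_adj A * A + 1\<^sub>m n - A1 * A))
       \<and> ((\<exists>X. is_mink_inverse A X) \<longleftrightarrow>
            invertible_mat (A * mink_adj A + 1\<^sub>m m - A * A1))
       \<and> (\<forall>X. is_mink_inverse A X \<longrightarrow>
            X = mink_adj (A * the (mat_inverse (mink_adj A * A + 1\<^sub>m n - A1 * A)))
          \<and> X = mink_adj (the (mat_inverse (A * mink_adj A + 1\<^sub>m m - A * A1)) * A))"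
proof -
  note A = assms(1) and A1 = assms(2) and g = assms(3)
  have dA[simp]: "dim_row A = m" "dim_col A = n" using A by auto
  have dA1[simp]: "dim_row A1 = n" "dim_col A1 = m" using A1 by auto
  define B where "B = mink_adj A * A + 1\<^sub>m n - A1 * A"
  define D where "D = A * mink_adj A + 1\<^sub>m m - A * A1"
  have Bc: "B \<in> carrier_mat n n" and Dc: "D \<in> carrier_mat m m" unfolding B_def D_def by auto
  have F: "invertible_mat B \<and> invertible_mat D \<and> X = mink_adj (A * the (mat_inverse B))
      \<and> X = mink_adj (the (mat_inverse D) * A)" if mi: "is_mink_inverse A X" for X
  proof -
    define C where "C = 1\<^sub>m n - X * A + A1 * (A * (X * mink_adj X))"
    define C' where "C' = 1\<^sub>m m - A * X + mink_adj X * (X * (A * A1))"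
    note fw = forward[OF A A1 g mi, folded C_def C'_def B_def D_def]
    have CB: "C * B = 1\<^sub>m n" by (rule mat_mult_left_right_inverse[OF Bc fw(5) fw(1)])
    have DC: "D * C' = 1\<^sub>m m" by (rule mat_mult_left_right_inverse[OF fw(6) Dc fw(2)])
    have iB: "invertible_mat B" using inv_char[OF Bc] fw CB by auto
    have iD: "invertible_mat D" using inv_char[OF Dc] fw DC by auto
    have tB: "the (mat_inverse B) = C" by (rule inv_the[OF Bc fw(5) fw(1) CB])
    have tD: "the (mat_inverse D) = C'" by (rule inv_the[OF Dc fw(6) DC fw(2)])
    show ?thesis using iB iD tB tD fw(3,4) by simp
  qed
  have B1: "\<exists>X. is_mink_inverse A X" if iB: "invertible_mat B"
  proof -
    obtain C where C: "C \<in> carrier_mat n n" "B * C = 1\<^sub>m n" "C * B = 1\<^sub>m n"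
      using iB inv_char[OF Bc] by auto
    show ?thesis using backward[OF A A1 g C(1) C(2,3)[unfolded B_def]] by blast
  qed
  have D1: "\<exists>X. is_mink_inverse A X" if iD: "invertible_mat D"
  proof -
    obtain E where E: "E \<in> carrier_mat m m" "D * E = 1\<^sub>m m" "E * D = 1\<^sub>m m"
      using iD inv_char[OF Dc] by auto
    have dE[simp]: "dim_row E = m" "dim_col E = m" using E by auto
    have A': "mink_adj A \<in> carrier_mat n m" by (rule carrier_matI) simp_all
    have A1': "mink_adj A1 \<in> carrier_mat m n" by (rule carrier_matI) simp_all
    have E': "mink_adj E \<in> carrier_mat m m" by (rule carrier_matI) simp_all
    have g': "mink_adj A * mink_adj A1 * mink_adj A = mink_adj A"
    proof -
      have "mink_adj (A * A1 * A) = mink_adj A" by (simp add: g)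
      thus ?thesis by (simp add: ma_mult massoc)
    qed
    have BD: "mink_adj (mink_adj A) * mink_adj A + 1\<^sub>m m - mink_adj A1 * mink_adj A = mink_adj D"
      unfolding D_def by (simp add: ma_add ma_minus ma_mult)
    have 1: "mink_adj D * mink_adj E = 1\<^sub>m m"
    proof -
      have "mink_adj D * mink_adj E = mink_adj (E * D)" by (simp add: ma_mult D_def)
      thus ?thesis using E by simp
    qed
    have 2: "mink_adj E * mink_adj D = 1\<^sub>m m"
    proof -
      have "mink_adj E * mink_adj D = mink_adj (D * E)" by (simp add: ma_mult D_def)
      thus ?thesis using E by simp
    qed
    have "is_mink_inverse (mink_adj A) (mink_adj (mink_adj E) * mink_adj (mink_adj A))"
      by (rule backward[OF A' A1' g' E']) (simp_all only: BD 1 2)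
    from mi_adj[OF this] show ?thesis by blast
  qed
  show ?thesis
    unfolding B_def[symmetric] D_def[symmetric]
    using F B1 D1 by blast
qed

end
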